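(* Let $\Xi\subseteq L^0(\mathbb{R}^d,\mathcal{F})$ be infinitely $\mathcal{F}$-decomposable, and let $\Gamma$ be an $\mathcal{F}$-measurable random set such that $\Gamma(\omega)$ is open and non-empty for almost all $\omega$. Then $$L^0(\Gamma,\mathcal{F})+\Xi=L^0(\Gamma,\mathcal{F})+\mathrm{cl}_0\,\Xi,$$ where the sums are elementwise (Minkowski) sums of families of random vectors.
   Context: $(\Omega,\mathcal{F},\mathbb{P})$ is a complete probability space. A map $\Gamma$ from $\Omega$ to subsets of $\mathbb{R}^d$ is an $\mathcal{F}$-measurable random set if its graph $\{(\omega,x):x\in\Gamma(\omega)\}$ belongs to $\mathcal{F}\otimes\mathcal{B}(\mathbb{R}^d)$. $L^0(\Gamma,\mathcal{F})$ is the family of $\mathcal{F}$-measurable random vectors $\xi$ with $\xi\in\Gamma$ a.s. (selections); $L^0(\mathbb{R}^d,\mathcal{F})$ is the family of all $\mathcal{F}$-measurable random vectors, identified up to a.s. equality. $\mathrm{cl}_0$ denotes closure with respect to convergence in probability. A family $\Xi\subseteq L^0(\mathbb{R}^d,\mathcal{F})$ is infinitely $\mathcal{F}$-decomposable if $\sum_n \xi_n\mathbf{1}_{A_n}\in\Xi$ for every sequence $(\xi_n)_{n\ge1}$ in $\Xi$ and every countable $\mathcal{F}$-measurable partition $(A_n)_{n\ge1}$ of $\Omega$. *)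

theory Defs
  imports "HOL-Probability.Probability"
begin

text \<open>Convention: a family represents the set of
a.s.-equivalence classes of its members.\<close>

definition L0 :: "'b measure \<Rightarrow> ('b \<Rightarrow> 'a::euclidean_space) set" where
  "L0 M = borel_measurable M"

definition random_set :: "'b measure \<Rightarrow> ('b \<Rightarrow> 'a::euclidean_space set) \<Rightarrow> bool" where
  "random_set M \<Gamma> \<longleftrightarrow> {(\<omega>, x). \<omega> \<in> space M \<and> x \<in> \<Gamma> \<omega>} \<in> sets (M \<Otimes>\<^sub>M borel)"

definition L0_sel :: "'b measure \<Rightarrow> ('b \<Rightarrow> 'a::euclidean_space set) \<Rightarrow> ('b \<Rightarrow> 'a) set" where
  "L0_sel M \<Gamma> = {\<xi> \<in> borel_measurable M. AE \<omega> in M. \<xi> \<omega> \<in> \<Gamma> \<omega>}"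

definition conv_in_prob :: "'b measure \<Rightarrow> (nat \<Rightarrow> 'b \<Rightarrow> 'a::euclidean_space) \<Rightarrow> ('b \<Rightarrow> 'a) \<Rightarrow> bool" where
  "conv_in_prob M X Y \<longleftrightarrow>
     (\<forall>\<epsilon>>0. (\<lambda>n. measure M {\<omega> \<in> space M. dist (X n \<omega>) (Y \<omega>) > \<epsilon>}) \<longlonglongrightarrow> 0)"

definition cl0 :: "'b measure \<Rightarrow> ('b \<Rightarrow> 'a::euclidean_space) set \<Rightarrow> ('b \<Rightarrow> 'a) set" where
  "cl0 M \<Xi> = {\<xi> \<in> borel_measurable M. \<exists>X. (\<forall>n. X n \<in> \<Xi>) \<and> conv_in_prob M X \<xi>}"

text \<open>Infinite decomposability (membership of the glued vector up to a.s. equality,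
 since elements of L0 are equivalence classes).\<close>
definition inf_decomposable :: "'b measure \<Rightarrow> ('b \<Rightarrow> 'a::euclidean_space) set \<Rightarrow> bool" where
  "inf_decomposable M \<Xi> \<longleftrightarrow>
     (\<forall>\<xi> A. (\<forall>n. \<xi> n \<in> \<Xi>) \<and> (\<forall>n. A n \<in> sets M) \<and> disjoint_family A \<and> (\<Union>n. A n) = space M
        \<longrightarrow> (\<exists>\<eta>\<in>\<Xi>. AE \<omega> in M. \<eta> \<omega> = (\<Sum>n. indicator (A n) \<omega> *\<^sub>R \<xi> n \<omega>)))"

definition msum :: "('b \<Rightarrow> 'a::euclidean_space) set \<Rightarrow> ('b \<Rightarrow> 'a) set \<Rightarrow> ('b \<Rightarrow> 'a) set" where
  "msum A B = {(\<lambda>\<omega>. f \<omega> + g \<omega>) | f g. f \<in> A \<and> g \<in> B}"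

end

theory Submission
  imports Defs
begin

theorem proposition2p3:
  fixes M :: "'b measure" and \<Xi> :: "('b \<Rightarrow> 'a::euclidean_space) set"
    and \<Gamma> :: "'b \<Rightarrow> 'a set"
  assumes "prob_space M" and "complete_measure M"
    and "\<Xi> \<subseteq> L0 M"
    and "inf_decomposable M \<Xi>"
    and "random_set M \<Gamma>"
    and "AE \<omega> in M. open (\<Gamma> \<omega>) \<and> \<Gamma> \<omega> \<noteq> {}"
  shows "msum (L0_sel M \<Gamma>) \<Xi> = msum (L0_sel M \<Gamma>) (cl0 M \<Xi>)"
proof -
  interpret P: prob_space M by fact
  have XiM: "\<And>x. x \<in> \<Xi> \<Longrightarrow> x \<in> borel_measurable M" using assms(3) unfolding L0_def by auto
  have sub: "\<Xi> \<subseteq> cl0 M \<Xi>"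
  proof
    fix x assume x: "x \<in> \<Xi>"
    show "x \<in> cl0 M \<Xi>" unfolding cl0_def conv_in_prob_def
      using x XiM[OF x] by (intro CollectI conjI exI[of _ "\<lambda>n. x"]) auto
  qed
  have sup: "msum (L0_sel M \<Gamma>) (cl0 M \<Xi>) \<subseteq> msum (L0_sel M \<Gamma>) \<Xi>"
  proof
    fix u assume "u \<in> msum (L0_sel M \<Gamma>) (cl0 M \<Xi>)"
    then obtain \<gamma> \<zeta> where u: "u = (\<lambda>\<omega>. \<gamma> \<omega> + \<zeta> \<omega>)" and g: "\<gamma> \<in> L0_sel M \<Gamma>"
      and z: "\<zeta> \<in> cl0 M \<Xi>" unfolding msum_def by auto
    have gm: "\<gamma> \<in> borel_measurable M" and gae: "AE \<omega> in M. \<gamma> \<omega> \<in> \<Gamma> \<omega>"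
      using g unfolding L0_sel_def by auto
    obtain X where X: "\<And>n. X n \<in> \<Xi>" and zm: "\<zeta> \<in> borel_measurable M"
      and conv: "conv_in_prob M X \<zeta>" using z unfolding cl0_def by auto
    have Xm: "\<And>n. X n \<in> borel_measurable M" using XiM X by auto
    have aek: "AE \<omega> in M. \<exists>n. dist (X n \<omega>) (\<zeta> \<omega>) \<le> 1 / Suc k" for k
    proof -
      define e :: real where "e = 1 / Suc k"
      have e: "e > 0" unfolding e_def by auto
      define S where "S = {\<omega> \<in> space M. \<forall>n. e < dist (X n \<omega>) (\<zeta> \<omega>)}"
      define T where "T n = {\<omega> \<in> space M. e < dist (X n \<omega>) (\<zeta> \<omega>)}" for n
      have Tm: "T n \<in> sets M" for n unfolding T_def using Xm[of n] zm by measurable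
      have Sm: "S \<in> sets M" unfolding S_def using Xm zm by measurable
      have "S \<subseteq> T n" for n unfolding S_def T_def by auto
      hence le: "measure M S \<le> measure M (T n)" for n using Tm by (intro P.finite_measure_mono) auto
      have lim: "(\<lambda>n. measure M (T n)) \<longlonglongrightarrow> 0" using conv e unfolding conv_in_prob_def T_def by auto
      have "measure M S \<le> 0" by (rule LIMSEQ_le_const[OF lim]) (use le in auto)
      hence "measure M S = 0" by (simp add: measure_le_0_iff)
      hence "emeasure M S = 0" using P.emeasure_eq_measure by simp
      moreover have "{\<omega> \<in> space M. \<not> (\<exists>n. dist (X n \<omega>) (\<zeta> \<omega>) \<le> e)} = S"
        unfolding S_def by (auto simp: not_le)
      ultimately have "AE \<omega> in M. \<exists>n. dist (X n \<omega>) (\<zeta> \<omega>) \<le> e"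
        using AE_iff_measurable[OF Sm] by simp
      thus ?thesis unfolding e_def .
    qed
    hence aeall: "AE \<omega> in M. \<forall>k::nat. \<exists>n. dist (X n \<omega>) (\<zeta> \<omega>) \<le> 1 / Suc k"
      by (simp add: AE_all_countable)
    define B where "B n = {\<omega> \<in> space M. \<gamma> \<omega> + \<zeta> \<omega> - X n \<omega> \<in> \<Gamma> \<omega>}" for n
    have Bm: "B n \<in> sets M" for n
    proof -
      define G where "G = {(\<omega>, x). \<omega> \<in> space M \<and> x \<in> \<Gamma> \<omega>}"
      have G: "G \<in> sets (M \<Otimes>\<^sub>M borel)" using assms(5) unfolding random_set_def G_def by auto
      have hm: "(\<lambda>\<omega>. (\<omega>, \<gamma> \<omega> + \<zeta> \<omega> - X n \<omega>)) \<in> M \<rightarrow>\<^sub>M M \<Otimes>\<^sub>M borel"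
        using gm zm Xm[of n] by measurable
      have "(\<lambda>\<omega>. (\<omega>, \<gamma> \<omega> + \<zeta> \<omega> - X n \<omega>)) -` G \<inter> space M = B n"
        unfolding G_def B_def by auto
      thus ?thesis using measurable_sets[OF hm G] by simp
    qed
    have aeB: "AE \<omega> in M. \<omega> \<in> (\<Union>n. B n)"
      using aeall gae assms(6) AE_space
    proof eventually_elim
      case (elim \<omega>)
      then obtain r where r: "r > 0" "ball (\<gamma> \<omega>) r \<subseteq> \<Gamma> \<omega>"
        using open_contains_ball by blast
      obtain k :: nat where k: "1 / Suc k < r" using r(1)
        by (metis Suc_eq_plus1_left nat_approx_posE of_nat_Suc)
      obtain n where n: "dist (X n \<omega>) (\<zeta> \<omega>) \<le> 1 / Suc k" using elim by blast
      have "dist (\<gamma> \<omega>) (\<gamma> \<omega> + \<zeta> \<omega> - X n \<omega>) = dist (X n \<omega>) (\<zeta> \<omega>)"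
        by (simp add: dist_norm algebra_simps)
      hence "\<gamma> \<omega> + \<zeta> \<omega> - X n \<omega> \<in> \<Gamma> \<omega>" using r n k by (auto simp: subset_iff)
      thus ?case unfolding B_def using elim by auto
    qed
    define N where "N = space M - (\<Union>n. B n)"
    have Nm: "N \<in> sets M" unfolding N_def using Bm by auto
    define C where "C = disjointed B"
    have Cm: "C n \<in> sets M" for n unfolding C_def using Bm using sets.range_disjointed_sets[of B M] by auto
    have CB: "C n \<subseteq> B n" for n unfolding C_def by (rule disjointed_subset)
    have Cdisj: "disjoint_family C" unfolding C_def by (rule disjoint_family_disjointed)
    have CU: "(\<Union>n. C n) = (\<Union>n. B n)" unfolding C_def by (rule UN_disjointed_eq)
    have Bsp: "B n \<subseteq> space M" for n unfolding B_def by auto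
    define A where "A n = (if n = 0 then C 0 \<union> N else C n)" for n
    have Am: "\<forall>n. A n \<in> sets M" unfolding A_def using Cm Nm by auto
    have NC: "N \<inter> C n = {}" for n unfolding N_def using CB by blast
    have Adisj: "disjoint_family A"
      unfolding disjoint_family_on_def
    proof (intro ballI impI)
      fix m n :: nat assume "m \<noteq> n"
      thus "A m \<inter> A n = {}" unfolding A_def using Cdisj[unfolded disjoint_family_on_def] NC
        by (cases "m = 0"; cases "n = 0") (simp_all add: Int_Un_distrib Int_Un_distrib2 Int_commute)
    qed
    have AU: "(\<Union>n. A n) = space M"
    proof -
      have "(\<Union>n. A n) = (\<Union>n. C n) \<union> N" unfolding A_def by (auto split: if_splits) (metis)
      also have "\<dots> = space M" unfolding CU N_def using Bsp by blast
      finally show ?thesis .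
    qed
    have pre: "(\<forall>n. X n \<in> \<Xi>) \<and> (\<forall>n. A n \<in> sets M) \<and> disjoint_family A \<and> (\<Union>n. A n) = space M"
      using X Am Adisj AU by simp
    obtain \<eta> where eta: "\<eta> \<in> \<Xi>"
      and etae: "AE \<omega> in M. \<eta> \<omega> = (\<Sum>n. indicator (A n) \<omega> *\<^sub>R X n \<omega>)"
      using mp[OF spec[OF spec[OF assms(4)[unfolded inf_decomposable_def], of X], of A] pre] by (elim bexE)
    have em: "\<eta> \<in> borel_measurable M" using XiM eta by auto
    define f where "f = (\<lambda>\<omega>. \<gamma> \<omega> + \<zeta> \<omega> - \<eta> \<omega>)"
    have fm: "f \<in> borel_measurable M" unfolding f_def using gm zm em by measurable
    have fae: "AE \<omega> in M. f \<omega> \<in> \<Gamma> \<omega>"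
      using aeB etae
    proof eventually_elim
      case (elim \<omega>)
      then obtain m where m: "\<omega> \<in> C m" using CU by blast
      have ind: "indicator (A n) \<omega> = (if n = m then 1 else (0::real))" for n
      proof -
        have "\<omega> \<in> A m" using m unfolding A_def by auto
        moreover have "n \<noteq> m \<Longrightarrow> \<omega> \<notin> A n" using Adisj[unfolded disjoint_family_on_def] \<open>\<omega> \<in> A m\<close> by blast
        ultimately show ?thesis by (auto simp: indicator_def)
      qed
      have "(\<lambda>n. indicator (A n) \<omega> *\<^sub>R X n \<omega>) = (\<lambda>n. if n = m then X n \<omega> else 0)"
        by (auto simp: ind)
      hence "(\<Sum>n. indicator (A n) \<omega> *\<^sub>R X n \<omega>) = X m \<omega>"
        using sums_unique[OF sums_single[of m "\<lambda>n. X n \<omega>"]] by simp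
      hence "\<eta> \<omega> = X m \<omega>" using elim by simp
      moreover have "\<omega> \<in> B m" using m CB by blast
      ultimately show ?case unfolding B_def f_def by auto
    qed
    have "f \<in> L0_sel M \<Gamma>" unfolding L0_sel_def using fm fae by auto
    moreover have "u = (\<lambda>\<omega>. f \<omega> + \<eta> \<omega>)" unfolding u f_def by auto
    ultimately show "u \<in> msum (L0_sel M \<Gamma>) \<Xi>" unfolding msum_def using eta by blast
  qed
  moreover have "msum (L0_sel M \<Gamma>) \<Xi> \<subseteq> msum (L0_sel M \<Gamma>) (cl0 M \<Xi>)"
    using sub unfolding msum_def by blast
  ultimately show ?thesis by blast
qed

end
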